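(* In a monotonous quiver, the property of a vertex of being phylogenetic is anti-hereditary: every ancestor of a phylogenetic vertex is phylogenetic.
   Context: A quiver consists of a class of vertices and, for each ordered pair of vertices $(A,B)$, a set of edges $A\to B$ (loops and multiple edges allowed). An evolution of length $m\ge 0$ is a sequence $A_0\leftarrow A_1\leftarrow\cdots\leftarrow A_m$ of vertices together with edges $A_k\to A_{k-1}$ ($1\le k\le m$); $A_0$ is its initial and $A_m$ its terminal vertex. Write $A\le B$ ($A$ is an ancestor of $B$) if there is an evolution with initial vertex $A$ and terminal vertex $B$; $A,B$ are isotypic ($A\sim B$) if $A\le B$ and $B\le A$. A vertex $A$ is primitive if every ancestor of $A$ is isotypic to $A$. A full evolution for $X$ is an evolution with primitive initial vertex and terminal vertex $X$. The height $h(X)$ is the smallest length of a full evolution for $X$ ($\infty$ if none). An evolution $\alpha=(A_0\leftarrow\cdots\leftarrow A_m)$ embeds in $\beta=(B_0\leftarrow\cdots\leftarrow B_n)$ if $m\le n$ and there are $0\le r_0<\cdots<r_m\le n$ with $A_k\sim B_{r_k}$. A universal evolution for $X$ is a full evolution for $X$ embedding in every full evolution for $X$; $X$ is phylogenetic if one exists. A quiver is monotonous if $h(A)\ge h(B)$ for every edge $A\to B$. *)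

theory Defs
  imports Main "HOL-Library.Extended_Nat"
begin

text \<open>A quiver on the vertex type 'v is given by edge sets E A B (edges A -> B).
An evolution A_0 <- A_1 <- ... <- A_m is a pair (As, es) of a vertex list As = [A_0,...,A_m]
and an edge list es = [e_1,...,e_m] with e_k an edge A_k -> A_(k-1).\<close>

definition evolution :: "('v \<Rightarrow> 'v \<Rightarrow> 'e set) \<Rightarrow> 'v list \<times> 'e list \<Rightarrow> bool" where
  "evolution E ev \<longleftrightarrow> (case ev of (As, es) \<Rightarrow>
     length As = Suc (length es) \<and>
     (\<forall>k. 1 \<le> k \<and> k \<le> length es \<longrightarrow> es ! (k - 1) \<in> E (As ! k) (As ! (k - 1))))"

definition ev_len :: "'v list \<times> 'e list \<Rightarrow> nat" where
  "ev_len ev = length (snd ev)"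

definition initial :: "'v list \<times> 'e list \<Rightarrow> 'v" where
  "initial ev = hd (fst ev)"

definition terminal :: "'v list \<times> 'e list \<Rightarrow> 'v" where
  "terminal ev = last (fst ev)"

definition ancestor :: "('v \<Rightarrow> 'v \<Rightarrow> 'e set) \<Rightarrow> 'v \<Rightarrow> 'v \<Rightarrow> bool" where
  "ancestor E A B \<longleftrightarrow> (\<exists>ev. evolution E ev \<and> initial ev = A \<and> terminal ev = B)"

definition isotypic :: "('v \<Rightarrow> 'v \<Rightarrow> 'e set) \<Rightarrow> 'v \<Rightarrow> 'v \<Rightarrow> bool" where
  "isotypic E A B \<longleftrightarrow> ancestor E A B \<and> ancestor E B A"

definition primitive :: "('v \<Rightarrow> 'v \<Rightarrow> 'e set) \<Rightarrow> 'v \<Rightarrow> bool" where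
  "primitive E A \<longleftrightarrow> (\<forall>B. ancestor E B A \<longrightarrow> isotypic E B A)"

definition full_evolution :: "('v \<Rightarrow> 'v \<Rightarrow> 'e set) \<Rightarrow> 'v \<Rightarrow> 'v list \<times> 'e list \<Rightarrow> bool" where
  "full_evolution E X ev \<longleftrightarrow> evolution E ev \<and> primitive E (initial ev) \<and> terminal ev = X"

definition height :: "('v \<Rightarrow> 'v \<Rightarrow> 'e set) \<Rightarrow> 'v \<Rightarrow> enat" where
  "height E X = (INF ev \<in> {ev. full_evolution E X ev}. enat (ev_len ev))"

definition embeds :: "('v \<Rightarrow> 'v \<Rightarrow> 'e set) \<Rightarrow> 'v list \<times> 'e list \<Rightarrow> 'v list \<times> 'e list \<Rightarrow> bool" where
  "embeds E \<alpha> \<beta> \<longleftrightarrow> ev_len \<alpha> \<le> ev_len \<beta> \<and>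
     (\<exists>r :: nat \<Rightarrow> nat. (\<forall>k < ev_len \<alpha>. r k < r (Suc k)) \<and> r (ev_len \<alpha>) \<le> ev_len \<beta> \<and>
        (\<forall>k \<le> ev_len \<alpha>. isotypic E (fst \<alpha> ! k) (fst \<beta> ! r k)))"

definition universal_evolution :: "('v \<Rightarrow> 'v \<Rightarrow> 'e set) \<Rightarrow> 'v \<Rightarrow> 'v list \<times> 'e list \<Rightarrow> bool" where
  "universal_evolution E X ev \<longleftrightarrow> full_evolution E X ev \<and>
     (\<forall>ev'. full_evolution E X ev' \<longrightarrow> embeds E ev ev')"

definition phylogenetic :: "('v \<Rightarrow> 'v \<Rightarrow> 'e set) \<Rightarrow> 'v \<Rightarrow> bool" where
  "phylogenetic E X \<longleftrightarrow> (\<exists>ev. universal_evolution E X ev)"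

definition monotonous :: "('v \<Rightarrow> 'v \<Rightarrow> 'e set) \<Rightarrow> bool" where
  "monotonous E \<longleftrightarrow> (\<forall>A B. E A B \<noteq> {} \<longrightarrow> height E A \<ge> height E B)"

end

theory Submission
  imports Defs
begin

lemma evolution_alt:
  "evolution E ev \<longleftrightarrow> length (fst ev) = Suc (length (snd ev)) \<and>
     (\<forall>k<length (snd ev). snd ev ! k \<in> E (fst ev ! Suc k) (fst ev ! k))"
proof (cases ev)
  case (Pair As es)
  show ?thesis unfolding Pair evolution_def
  proof (simp, intro iffI conjI allI impI)
    fix k assume H: "length As = Suc (length es) \<and> (\<forall>k. Suc 0 \<le> k \<and> k \<le> length es \<longrightarrow> es ! (k - Suc 0) \<in> E (As ! k) (As ! (k - Suc 0)))"
      and "k < length es"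
    then show "es ! k \<in> E (As ! Suc k) (As ! k)" using H[THEN conjunct2, rule_format, of "Suc k"] by simp
  next
    fix k assume H: "length As = Suc (length es) \<and> (\<forall>k<length es. es ! k \<in> E (As ! Suc k) (As ! k))"
      and "Suc 0 \<le> k \<and> k \<le> length es"
    then show "es ! (k - Suc 0) \<in> E (As ! k) (As ! (k - Suc 0))"
    proof -
      have "k - 1 < length es" using \<open>Suc 0 \<le> k \<and> k \<le> length es\<close> by arith
      then have "es ! (k - 1) \<in> E (As ! Suc (k - 1)) (As ! (k - 1))" using H by blast
      then show ?thesis using \<open>Suc 0 \<le> k \<and> k \<le> length es\<close> by simp
    qed
  qed auto
qed

lemma ev_ne: "evolution E ev \<Longrightarrow> fst ev \<noteq> []"
  by (auto simp: evolution_alt)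

lemma initial_nth: "evolution E ev \<Longrightarrow> initial ev = fst ev ! 0"
  unfolding initial_def by (metis ev_ne hd_conv_nth)

lemma terminal_nth: "evolution E ev \<Longrightarrow> terminal ev = fst ev ! ev_len ev"
  unfolding terminal_def ev_len_def evolution_alt
  by (metis diff_Suc_1 last_conv_nth list.size(3) nat.distinct(1))

definition cat :: "'v list \<times> 'e list \<Rightarrow> 'v list \<times> 'e list \<Rightarrow> 'v list \<times> 'e list" where
  "cat a b = (fst a @ tl (fst b), snd a @ snd b)"

lemma cat_nth:
  assumes "evolution E a" "evolution E b" "terminal a = initial b" "i \<le> ev_len a + ev_len b"
  shows "fst (cat a b) ! i = (if i \<le> ev_len a then fst a ! i else fst b ! (i - ev_len a))"
proof -
  have la: "length (fst a) = Suc (ev_len a)" and lb: "length (fst b) = Suc (ev_len b)"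
    using assms by (auto simp: evolution_alt ev_len_def)
  have eq: "fst a ! ev_len a = fst b ! 0" using assms terminal_nth initial_nth by metis
  show ?thesis
  proof (cases "i < ev_len a")
    case True then show ?thesis using la by (simp add: cat_def nth_append)
  next
    case False
    show ?thesis
    proof (cases "i = ev_len a")
      case True then show ?thesis using la eq by (simp add: cat_def nth_append)
    next
      case F2: False
      then have "i > ev_len a" using False by simp
      then show ?thesis using la lb assms(4) by (simp add: cat_def nth_append nth_tl)
        (metis Suc_diff_Suc Suc_diff_le less_imp_le_nat nth_tl ) 
    qed
  qed
qed


lemma cat_ev:
  assumes a: "evolution E a" and b: "evolution E b" and eq: "terminal a = initial b"
  shows "evolution E (cat a b)" "initial (cat a b) = initial a"
    "terminal (cat a b) = terminal b" "ev_len (cat a b) = ev_len a + ev_len b"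
proof -
  have la: "length (fst a) = Suc (ev_len a)" and lb: "length (fst b) = Suc (ev_len b)"
    using a b by (auto simp: evolution_alt ev_len_def)
  have e0: "fst a ! ev_len a = fst b ! 0" using a b eq terminal_nth initial_nth by metis
  have len: "ev_len (cat a b) = ev_len a + ev_len b" by (simp add: cat_def ev_len_def)
  then show "ev_len (cat a b) = ev_len a + ev_len b" .
  show ev: "evolution E (cat a b)"
    unfolding evolution_alt
  proof (intro conjI allI impI)
    show "length (fst (cat a b)) = Suc (length (snd (cat a b)))"
      using la lb by (simp add: cat_def ev_len_def)
  next
    fix k assume k: "k < length (snd (cat a b))"
    then have k': "k < ev_len a + ev_len b" using len by (simp add: ev_len_def)
    have n1: "fst (cat a b) ! Suc k = (if Suc k \<le> ev_len a then fst a ! Suc k else fst b ! (Suc k - ev_len a))"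
      using cat_nth[OF a b eq, of "Suc k"] k' by simp
    have n2: "fst (cat a b) ! k = (if k \<le> ev_len a then fst a ! k else fst b ! (k - ev_len a))"
      using cat_nth[OF a b eq, of k] k' by simp
    show "snd (cat a b) ! k \<in> E (fst (cat a b) ! Suc k) (fst (cat a b) ! k)"
    proof (cases "k < ev_len a")
      case True
      then show ?thesis using a n1 n2 by (simp add: cat_def nth_append evolution_alt ev_len_def)
    next
      case False
      then have kb: "k - ev_len a < ev_len b" using k' by simp
      then have "snd b ! (k - ev_len a) \<in> E (fst b ! Suc (k - ev_len a)) (fst b ! (k - ev_len a))"
        using b by (simp add: evolution_alt ev_len_def)
      moreover have "fst (cat a b) ! k = fst b ! (k - ev_len a)"
        using n2 False e0 by (cases "k = ev_len a") auto
      moreover have "fst (cat a b) ! Suc k = fst b ! Suc (k - ev_len a)"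
        using n1 False by (simp add: Suc_diff_le)
      moreover have "snd (cat a b) ! k = snd b ! (k - ev_len a)"
        using False by (simp add: cat_def nth_append ev_len_def)
      ultimately show ?thesis by simp
    qed
  qed
  show "initial (cat a b) = initial a"
    using initial_nth[OF ev] initial_nth[OF a] cat_nth[OF a b eq, of 0] by simp
  show "terminal (cat a b) = terminal b"
    using terminal_nth[OF ev] terminal_nth[OF b] cat_nth[OF a b eq, of "ev_len a + ev_len b"] len e0
    by (cases "ev_len b = 0") auto
qed

definition pre :: "nat \<Rightarrow> 'v list \<times> 'e list \<Rightarrow> 'v list \<times> 'e list" where
  "pre k ev = (take (Suc k) (fst ev), take k (snd ev))"

definition suf :: "nat \<Rightarrow> 'v list \<times> 'e list \<Rightarrow> 'v list \<times> 'e list" where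
  "suf k ev = (drop k (fst ev), drop k (snd ev))"

lemma pre_ev:
  assumes ev: "evolution E ev" and k: "k \<le> ev_len ev"
  shows "evolution E (pre k ev)" "initial (pre k ev) = initial ev"
    "terminal (pre k ev) = fst ev ! k" "ev_len (pre k ev) = k"
proof -
  have l: "length (fst ev) = Suc (ev_len ev)" using ev by (simp add: evolution_alt ev_len_def)
  show e: "evolution E (pre k ev)" using ev k l unfolding evolution_alt pre_def ev_len_def
    by (auto simp: min_def)
  show "ev_len (pre k ev) = k" using k by (simp add: pre_def ev_len_def)
  show "initial (pre k ev) = initial ev" using initial_nth[OF e] initial_nth[OF ev]
    by (simp add: pre_def)
  show "terminal (pre k ev) = fst ev ! k" using terminal_nth[OF e] k
    by (simp add: pre_def ev_len_def)
qed

lemma suf_ev: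
  assumes ev: "evolution E ev" and k: "k \<le> ev_len ev"
  shows "evolution E (suf k ev)" "initial (suf k ev) = fst ev ! k"
    "terminal (suf k ev) = terminal ev" "ev_len (suf k ev) = ev_len ev - k"
proof -
  have l: "length (fst ev) = Suc (ev_len ev)" using ev by (simp add: evolution_alt ev_len_def)
  show e: "evolution E (suf k ev)" using ev k l unfolding evolution_alt suf_def ev_len_def
    by auto
  show "ev_len (suf k ev) = ev_len ev - k" by (simp add: suf_def ev_len_def)
  show "initial (suf k ev) = fst ev ! k" using initial_nth[OF e] k l
    by (simp add: suf_def)
  show "terminal (suf k ev) = terminal ev" using k l unfolding terminal_def suf_def
    by (simp add: last_drop)
qed

lemma height_le: "full_evolution E X ev \<Longrightarrow> height E X \<le> enat (ev_len ev)"
  unfolding height_def by (rule INF_lower) simp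

lemma height_attained:
  assumes "height E X = enat n"
  shows "\<exists>ev. full_evolution E X ev \<and> ev_len ev = n"
proof -
  define S where "S = (\<lambda>ev. enat (ev_len ev)) ` {ev. full_evolution E X ev}"
  have h: "Inf S = enat n" using assms by (simp add: height_def S_def)
  have ne: "S \<noteq> {}"
  proof
    assume "S = {}"
    then have "Inf S = \<infinity>" by (simp add: Inf_enat_def)
    with h show False by simp
  qed
  then obtain x where "x \<in> S" by blast
  then have "(LEAST x. x \<in> S) \<in> S" by (rule LeastI)
  then have "Inf S \<in> S" using ne by (simp add: Inf_enat_def)
  then have "enat n \<in> S" using h by simp
  then show ?thesis unfolding S_def by auto
qed

lemma height_step:
  assumes ev: "evolution E ev"
  shows "height E (terminal ev) \<le> height E (initial ev) + enat (ev_len ev)"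
proof (cases "height E (initial ev)")
  case (enat n)
  then obtain M where M: "full_evolution E (initial ev) M" "ev_len M = n"
    using height_attained[OF enat] by blast
  then have Me: "evolution E M" "terminal M = initial ev" "primitive E (initial M)"
    unfolding full_evolution_def by auto
  note C = cat_ev[OF Me(1) ev Me(2)]
  have "full_evolution E (terminal ev) (cat M ev)"
    unfolding full_evolution_def using C(1,2,3) Me(3) by simp
  then have "height E (terminal ev) \<le> enat (ev_len (cat M ev))" by (rule height_le)
  also have "\<dots> = height E (initial ev) + enat (ev_len ev)" using C(4) M(2) enat by simp
  finally show ?thesis .
next
  case infinity then show ?thesis by simp
qed

lemma mono_height:
  assumes m: "monotonous E" and ev: "evolution E ev"
  shows "j \<le> ev_len ev \<Longrightarrow> height E (fst ev ! 0) \<le> height E (fst ev ! j)"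
proof (induction j)
  case 0 then show ?case by simp
next
  case (Suc j)
  then have "snd ev ! j \<in> E (fst ev ! Suc j) (fst ev ! j)"
    using ev by (simp add: evolution_alt ev_len_def)
  then have "height E (fst ev ! j) \<le> height E (fst ev ! Suc j)"
    using m unfolding monotonous_def by blast
  then show ?case using Suc by simp
qed

lemma ancestor_height:
  assumes "monotonous E" "ancestor E A B" shows "height E A \<le> height E B"
proof -
  obtain ev where ev: "evolution E ev" "initial ev = A" "terminal ev = B"
    using assms(2) by (auto simp: ancestor_def)
  have "height E (fst ev ! 0) \<le> height E (fst ev ! ev_len ev)"
    using mono_height[OF assms(1) ev(1) order_refl] .
  then show ?thesis using ev initial_nth[OF ev(1)] terminal_nth[OF ev(1)] by simp
qed

lemma iso_height: "monotonous E \<Longrightarrow> isotypic E A B \<Longrightarrow> height E A = height E B"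
  unfolding isotypic_def using ancestor_height[of E A B] ancestor_height[of E B A] by (simp add: antisym)

lemma refl_ev: "evolution E ([A], []) \<and> initial ([A], []) = A \<and> terminal ([A], []) = A"
  by (simp add: evolution_alt initial_def terminal_def)

lemma iso_refl: "isotypic E A A"
proof -
  have "ancestor E A A" unfolding ancestor_def
    by (rule exI[of _ "([A], [])"]) (rule refl_ev)
  then show ?thesis unfolding isotypic_def by simp
qed

lemma ancestor_trans: "ancestor E A B \<Longrightarrow> ancestor E B C \<Longrightarrow> ancestor E A C"
proof -
  assume "ancestor E A B" "ancestor E B C"
  then obtain e1 e2 where e: "evolution E e1" "initial e1 = A" "terminal e1 = B"
    "evolution E e2" "initial e2 = B" "terminal e2 = C" by (auto simp: ancestor_def)
  then have "terminal e1 = initial e2" by simp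
  note c = cat_ev[OF e(1) e(4) this]
  show ?thesis unfolding ancestor_def using c e by blast
qed

lemma iso_trans: "isotypic E A B \<Longrightarrow> isotypic E B C \<Longrightarrow> isotypic E A C"
  unfolding isotypic_def using ancestor_trans[of E A B C] ancestor_trans[of E C B A] by simp

lemma iso_sym: "isotypic E A B \<Longrightarrow> isotypic E B A"
  unfolding isotypic_def by blast

lemma minimal_heights:
  assumes M: "full_evolution E Y M" and h: "height E Y = enat (ev_len M)" and k: "k \<le> ev_len M"
  shows "height E (fst M ! k) = enat k"
proof -
  have ev: "evolution E M" using M by (simp add: full_evolution_def)
  have "full_evolution E (fst M ! k) (pre k M)"
    using pre_ev[OF ev k] M by (simp add: full_evolution_def)
  then have up: "height E (fst M ! k) \<le> enat k" using height_le pre_ev(4)[OF ev k] by metis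
  have "height E Y \<le> height E (fst M ! k) + enat (ev_len M - k)"
    using height_step[OF suf_ev(1)[OF ev k]] suf_ev[OF ev k] M by (simp add: full_evolution_def)
  then have "enat (ev_len M) \<le> height E (fst M ! k) + enat (ev_len M - k)" using h by simp
  then show ?thesis using up k
    by (cases "height E (fst M ! k)") auto
qed

lemma strict_le:
  assumes "\<forall>k<n. (r::nat\<Rightarrow>nat) k < r (Suc k)"
  shows "k \<le> j \<Longrightarrow> j \<le> n \<Longrightarrow> r k \<le> r j"
proof (induction j)
  case 0 then show ?case by simp
next
  case (Suc j)
  show ?case
  proof (cases "k = Suc j")
    case True then show ?thesis by simp
  next
    case False
    then have "k \<le> j" "j \<le> n" "j < n" using Suc.prems by auto
    then have "r k \<le> r j" "r j < r (Suc j)" using Suc.IH assms by auto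
    then show ?thesis by simp
  qed
qed

theorem corollary6p2:
  fixes E :: "'v \<Rightarrow> 'v \<Rightarrow> 'e set"
  assumes "monotonous E"
    and "phylogenetic E X"
    and "ancestor E A X"
  shows "phylogenetic E A"
proof -
  note m = assms(1)
  obtain U where U: "full_evolution E X U" "\<And>ev'. full_evolution E X ev' \<Longrightarrow> embeds E U ev'"
    using assms(2) by (auto simp: phylogenetic_def universal_evolution_def)
  obtain Bv where Bv: "evolution E Bv" "initial Bv = A" "terminal Bv = X"
    using assms(3) by (auto simp: ancestor_def)
  define n where "n = ev_len U"
  have hXle: "height E X \<le> enat n" using height_le[OF U(1)] n_def by simp
  then obtain n' where n': "height E X = enat n'"
    by (cases "height E X") simp_all
  then obtain M where M: "full_evolution E X M" "ev_len M = n'" using height_attained[OF n'] by blast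
  have "ev_len U \<le> ev_len M" using U(2)[OF M(1)] unfolding embeds_def by (rule conjunct1)
  then have "n \<le> n'" using M(2) n_def by simp
  then have hX: "height E X = enat n" using hXle n' by simp
  have hU: "\<And>k. k \<le> n \<Longrightarrow> height E (fst U ! k) = enat k"
    using minimal_heights[OF U(1)] hX n_def by simp
  have "height E A \<le> height E X" using ancestor_height[OF m assms(3)] .
  then obtain a where a: "height E A = enat a" "a \<le> n" using hX by (cases "height E A") auto
  obtain F0 where F0: "full_evolution E A F0" "ev_len F0 = a" using height_attained[OF a(1)] by blast
  have hF: "\<And>k. k \<le> a \<Longrightarrow> height E (fst F0 ! k) = enat k"
    using minimal_heights[OF F0(1)] a F0(2) by simp
  have B0: "fst Bv ! 0 = A" using initial_nth[OF Bv(1)] Bv(2) by simp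
  have hB: "enat a \<le> height E (fst Bv ! j)" if "j \<le> ev_len Bv" for j
    using mono_height[OF m Bv(1) that] B0 a(1) by simp
  have key: "\<exists>r. (\<forall>k<a. r k < ev_len H \<and> isotypic E (fst U ! k) (fst H ! r k)) \<and>
                  (\<forall>k. Suc k < a \<longrightarrow> r k < r (Suc k))"
    if H: "full_evolution E A H" for H
  proof -
    have He: "evolution E H" "terminal H = A" "primitive E (initial H)"
      using H by (auto simp: full_evolution_def)
    have eq: "terminal H = initial Bv" using He Bv by simp
    note C = cat_ev[OF He(1) Bv(1) eq]
    have G: "full_evolution E X (cat H Bv)" using C He Bv by (simp add: full_evolution_def)
    obtain r where r: "\<forall>k<n. r k < r (Suc k)" "r n \<le> ev_len (cat H Bv)"
      "\<forall>k\<le>n. isotypic E (fst U ! k) (fst (cat H Bv) ! r k)"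
      using U(2)[OF G] n_def by (auto simp: embeds_def)
    have HA: "fst H ! ev_len H = A" using terminal_nth[OF He(1)] He(2) by simp
    have lt: "r k < ev_len H \<and> isotypic E (fst U ! k) (fst H ! r k)" if k: "k < a" for k
    proof -
      have kn: "k \<le> n" using k a by simp
      have rk: "r k \<le> ev_len H + ev_len Bv" using strict_le[OF r(1) kn order_refl] r(2) C(4) by simp
      have iso: "isotypic E (fst U ! k) (fst (cat H Bv) ! r k)" using r(3) kn by simp
      then have hk: "height E (fst (cat H Bv) ! r k) = enat k" using iso_height[OF m iso] hU[OF kn] by simp
      have "r k < ev_len H"
      proof (rule ccontr)
        assume "\<not> r k < ev_len H"
        then have "fst (cat H Bv) ! r k = fst Bv ! (r k - ev_len H)"
          using cat_nth[OF He(1) Bv(1) eq rk] HA Bv(2) initial_nth[OF Bv(1)]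
          by (cases "r k = ev_len H") auto
        moreover have "r k - ev_len H \<le> ev_len Bv" using rk by simp
        ultimately have "enat a \<le> enat k" using hB[of "r k - ev_len H"] hk by simp
        then show False using k by simp
      qed
      moreover have "fst (cat H Bv) ! r k = fst H ! r k"
        using cat_nth[OF He(1) Bv(1) eq rk] calculation by simp
      ultimately show ?thesis using iso by simp
    qed
    show ?thesis
      by (rule exI[of _ r]) (use lt r(1) a in auto)
  qed
  have isoF: "isotypic E (fst F0 ! k) (fst U ! k)" if k: "k < a" for k
  proof -
    obtain r where r: "\<forall>k<a. r k < ev_len F0 \<and> isotypic E (fst U ! k) (fst F0 ! r k)"
      using key[OF F0(1)] by blast
    have i: "isotypic E (fst U ! k) (fst F0 ! r k)" and rk: "r k < a" using r k F0(2) by auto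
    have "height E (fst F0 ! r k) = enat k"
      using iso_height[OF m i] hU k a by simp
    then have "r k = k" using hF rk by simp
    then show ?thesis using iso_sym[OF i] by simp
  qed
  have "universal_evolution E A F0"
    unfolding universal_evolution_def
  proof (intro conjI allI impI)
    show "full_evolution E A F0" by (rule F0(1))
  next
    fix H assume H: "full_evolution E A H"
    have He: "evolution E H" "terminal H = A" using H by (auto simp: full_evolution_def)
    have HA: "fst H ! ev_len H = A" using terminal_nth[OF He(1)] He(2) by simp
    have F0A: "fst F0 ! a = A" using terminal_nth[of E F0] F0 by (auto simp: full_evolution_def)
    have alen: "a \<le> ev_len H" using height_le[OF H] a(1) by simp
    obtain r where r: "\<forall>k<a. r k < ev_len H \<and> isotypic E (fst U ! k) (fst H ! r k)"
      "\<forall>k. Suc k < a \<longrightarrow> r k < r (Suc k)"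
      using key[OF H] by blast
    define r' where "r' k = (if k < a then r k else ev_len H)" for k
    show "embeds E F0 H"
      unfolding embeds_def F0(2)
    proof (intro conjI exI[of _ r'])
      show "a \<le> ev_len H" by (rule alen)
      show "\<forall>k<a. r' k < r' (Suc k)"
        using r unfolding r'_def by (auto simp: not_less_eq)
      show "r' a \<le> ev_len H" by (simp add: r'_def)
      show "\<forall>k\<le>a. isotypic E (fst F0 ! k) (fst H ! r' k)"
      proof (intro allI impI)
        fix k assume "k \<le> a"
        show "isotypic E (fst F0 ! k) (fst H ! r' k)"
        proof (cases "k < a")
          case True
          have "isotypic E (fst U ! k) (fst H ! r k)" using r(1) True by blast
          then have "isotypic E (fst F0 ! k) (fst H ! r k)" using iso_trans[OF isoF[OF True]] by blast
          then show ?thesis using True by (simp add: r'_def)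
        next
          case False then have "k = a" using \<open>k \<le> a\<close> by simp
          then show ?thesis using F0A HA iso_refl by (simp add: r'_def)
        qed
      qed
    qed
  qed
  then show ?thesis unfolding phylogenetic_def by (rule exI)
qed

end
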